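(* Let $k$ be a positive integer whose binary expansion has $m>2$ nonzero bits. Then the numerators of the fractions $s_{k,k}$ and $s_{2k}$, written in lowest terms, are both divisible by $2^{m-2}$.
   Context: For a partition $I=(i_1,\dots,i_r)$ of $k$, write $p_I=p_{i_1}\cdots p_{i_r}$ and let $s_I\in\mathbb{Q}$ denote the coefficient of $p_I$ in the $k$-th Hirzebruch $\mathcal{L}$-polynomial, i.e. $\mathcal{L}_k(p_1,\dots,p_k)=\sum_{|I|=k}s_Ip_I$, where $1+\mathcal{L}_1+\mathcal{L}_2+\cdots$ is the multiplicative sequence with characteristic power series $\sqrt{t}/\tanh\sqrt{t}$. In particular $s_k=\frac{2^{2k}(2^{2k-1}-1)|B_{2k}|}{(2k)!}$ (with $B_j$ the Bernoulli numbers) and $s_{k,k}=\tfrac12(s_k^2-s_{2k})$. *)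

theory Defs
  imports Complex_Main
begin

text \<open>Bernoulli numbers (convention B_1 = -1/2; only even indices are used):
  B_0 = 1 and sum_{j=0}^{n} C(n+1,j) B_j = 0 for n >= 1.\<close>
fun bernoulli :: "nat \<Rightarrow> rat" where
  "bernoulli n = (if n = 0 then 1 else
     - (\<Sum>j<n. of_nat (Suc n choose j) * bernoulli j) / of_nat (Suc n))"

text \<open>Coefficient s_k of p_k in the Hirzebruch L-polynomial L_k.\<close>
definition s_single :: "nat \<Rightarrow> rat" where
  "s_single k = 2 ^ (2 * k) * (2 ^ (2 * k - 1) - 1) * \<bar>bernoulli (2 * k)\<bar> / fact (2 * k)"

text \<open>Coefficient s_{k,k} of p_k^2 in L_{2k}.\<close>
definition s_double :: "nat \<Rightarrow> rat" where
  "s_double k = (s_single k ^ 2 - s_single (2 * k)) / 2"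

fun popcount :: "nat \<Rightarrow> nat" where
  "popcount n = (if n = 0 then 0 else n mod 2 + popcount (n div 2))"

definition numerator :: "rat \<Rightarrow> int" where
  "numerator q = fst (quotient_of q)"

end

theory Submission
  imports Defs
begin

declare bernoulli.simps[simp del]

lemma B0: "bernoulli 0 = 1"
  by (simp add: bernoulli.simps)

lemma brec: assumes "m \<ge> 2" shows "(\<Sum>j<m. of_nat (m choose j) * bernoulli j) = 0"
proof -
  obtain n where n: "m = Suc n" "n > 0" using assms by (cases m) auto
  have e: "bernoulli n * of_nat (Suc n) = - (\<Sum>j<n. of_nat (Suc n choose j) * bernoulli j)"
    using n(2) by (subst bernoulli.simps) (simp del: of_nat_Suc)
  have "(\<Sum>j<m. of_nat (m choose j) * bernoulli j) = (\<Sum>j<n. of_nat (Suc n choose j) * bernoulli j) + of_nat (Suc n) * bernoulli n"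
    by (simp add: n(1) del: of_nat_Suc)
  also have "\<dots> = 0" using e by (simp add: algebra_simps)
  finally show ?thesis .
qed

lemma brec1: "(\<Sum>j<m. of_nat (m choose j) * bernoulli j) = (if m = 1 then 1 else 0)" if "m \<ge> 1"
  using brec[of m] that by (cases "m = 1") (auto simp: B0)

lemma chswap: assumes "i + j \<le> n"
  shows "(n choose j) * ((n - j) choose i) = (n choose i) * ((n - i) choose j)"
proof -
  have "(n choose (i+j)) * ((i+j) choose j) = (n choose j) * ((n-j) choose i)"
    using choose_mult[of j "i+j" n] assms by simp
  moreover have "(n choose (i+j)) * ((i+j) choose i) = (n choose i) * ((n-i) choose j)"
    using choose_mult[of i "i+j" n] assms by simp
  moreover have "((i+j) choose j) = ((i+j) choose i)"
    by (metis add_diff_cancel_left' binomial_symmetric le_add2 add.commute)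
  ultimately show ?thesis by simp
qed

lemma lemB: "(\<Sum>j\<le>n. of_nat (Suc n choose j) * bernoulli j * (2 ^ (Suc n - j) - 1)) = (of_nat (Suc n) :: rat)"
proof -
  have t: "(2::rat) ^ (Suc n - j) - 1 = (\<Sum>i\<in>{i. i \<in> {..n} \<and> i + j \<le> n}. of_nat ((Suc n - j) choose i))" if "j \<le> n" for j
  proof -
    have "{i. i \<in> {..n} \<and> i + j \<le> n} = {..<Suc n - j}" using that by auto
    moreover have "(\<Sum>i\<le>Suc n - j. of_nat ((Suc n - j) choose i)) = (2::rat) ^ (Suc n - j)"
      using choose_row_sum[of "Suc n - j"] by (metis of_nat_numeral of_nat_power of_nat_sum)
    moreover have "{..Suc n - j} = insert (Suc n - j) {..<Suc n - j}" by auto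
    ultimately show ?thesis by simp
  qed
  have "(\<Sum>j\<le>n. of_nat (Suc n choose j) * bernoulli j * (2 ^ (Suc n - j) - 1))
      = (\<Sum>j\<le>n. \<Sum>i\<in>{i. i \<in> {..n} \<and> i + j \<le> n}. of_nat (Suc n choose j) * of_nat ((Suc n - j) choose i) * bernoulli j)"
    by (rule sum.cong) (auto simp: t sum_distrib_left sum_distrib_right algebra_simps)
  also have "\<dots> = (\<Sum>i\<le>n. \<Sum>j\<in>{j. j \<in> {..n} \<and> i + j \<le> n}. of_nat (Suc n choose j) * of_nat ((Suc n - j) choose i) * bernoulli j)"
    by (rule sum.swap_restrict) auto
  also have "\<dots> = (\<Sum>i\<le>n. of_nat (Suc n choose i) * (\<Sum>j<Suc n - i. of_nat ((Suc n - i) choose j) * bernoulli j))"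
  proof (rule sum.cong)
    fix i assume i: "i \<in> {..n}"
    have s: "{j. j \<in> {..n} \<and> i + j \<le> n} = {..<Suc n - i}" using i by auto
    show "(\<Sum>j\<in>{j. j \<in> {..n} \<and> i + j \<le> n}. of_nat (Suc n choose j) * of_nat ((Suc n - j) choose i) * bernoulli j)
        = of_nat (Suc n choose i) * (\<Sum>j<Suc n - i. of_nat ((Suc n - i) choose j) * bernoulli j)"
      unfolding s sum_distrib_left
    proof (rule sum.cong)
      fix j assume "j \<in> {..<Suc n - i}"
      hence "i + j \<le> Suc n" by auto
      from chswap[OF this] show "of_nat (Suc n choose j) * of_nat ((Suc n - j) choose i) * bernoulli j
         = of_nat (Suc n choose i) * (of_nat ((Suc n - i) choose j) * bernoulli j)"
        by (metis (mono_tags, lifting) mult.assoc of_nat_mult)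
    qed simp
  qed simp
  also have "\<dots> = (\<Sum>i\<le>n. if i = n then of_nat (Suc n) else 0)"
    by (rule sum.cong) (auto simp: brec1)
  also have "\<dots> = of_nat (Suc n)" by simp
  finally show ?thesis .
qed

definition Z2 :: "rat \<Rightarrow> bool" where
  "Z2 q \<longleftrightarrow> (\<exists>a b::int. odd b \<and> q = of_int a / of_int b)"

lemma Z2_int: "Z2 (of_int a)" unfolding Z2_def by (rule exI[of _ a], rule exI[of _ 1]) simp
lemma Z2_nat: "Z2 (of_nat a)" using Z2_int[of "int a"] by simp
lemma Z2_add: assumes "Z2 x" "Z2 y" shows "Z2 (x + y)"
proof -
  obtain a b where ab: "odd b" "x = of_int a / of_int b" using assms(1) unfolding Z2_def by blast
  obtain c d where cd: "odd d" "y = of_int c / of_int d" using assms(2) unfolding Z2_def by blast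
  have o: "odd (b*d)" using ab cd by simp
  have "b \<noteq> 0" "d \<noteq> 0" using ab cd by auto
  hence "of_int b \<noteq> (0::rat)" "of_int d \<noteq> (0::rat)" by auto
  hence "x + y = of_int (a*d + c*b) / of_int (b*d)"
    using ab cd by (simp add: field_simps)
  with o show ?thesis unfolding Z2_def by blast
qed
lemma Z2_mult: "Z2 x \<Longrightarrow> Z2 y \<Longrightarrow> Z2 (x * y)"
  unfolding Z2_def
proof (elim exE conjE)
  fix a b c d :: int assume "odd b" "x = of_int a / of_int b" "odd d" "y = of_int c / of_int d"
  then show "\<exists>a b::int. odd b \<and> x * y = of_int a / of_int b"
    by (intro exI[of _ "a*c"] exI[of _ "b*d"]) auto
qed
lemma Z2_uminus: "Z2 x \<Longrightarrow> Z2 (- x)"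
  using Z2_mult[OF Z2_int[of "-1"]] by simp
lemma Z2_diff: "Z2 x \<Longrightarrow> Z2 y \<Longrightarrow> Z2 (x - y)"
  using Z2_add Z2_uminus by (metis diff_conv_add_uminus)
lemma Z2_abs: "Z2 x \<Longrightarrow> Z2 \<bar>x\<bar>"
  by (cases "x \<ge> 0") (auto simp: Z2_uminus)
lemma Z2_divodd: "Z2 x \<Longrightarrow> odd (c::nat) \<Longrightarrow> Z2 (x / of_nat c)"
  unfolding Z2_def
proof (elim exE conjE)
  fix a b :: int assume "odd b" "x = of_int a / of_int b" "odd c"
  then show "\<exists>a b::int. odd b \<and> x / of_nat c = of_int a / of_int b"
    by (intro exI[of _ "a"] exI[of _ "b * int c"]) auto
qed
lemma Z2_sum: "(\<And>i. i \<in> A \<Longrightarrow> Z2 (f i)) \<Longrightarrow> Z2 (sum f A)"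
proof (induction A rule: infinite_finite_induct)
  case (infinite A) then show ?case using Z2_int[of 0] by simp
next
  case empty then show ?case using Z2_int[of 0] by simp
next
  case (insert x F) then show ?case by (simp add: Z2_add)
qed

lemma Z2_pow_div: "d > 0 \<Longrightarrow> Z2 (2 ^ (d - 1) / of_nat d)"
proof (induction d rule: less_induct)
  case (less d)
  show ?case
  proof (cases "even d")
    case False
    then show ?thesis using Z2_divodd[OF Z2_nat[of "2^(d-1)"]] by simp
  next
    case True
    then obtain e where e: "d = 2 * e" by blast
    with less have "e > 0" "e < d" by auto
    with less have "Z2 (2 ^ (e - 1) / of_nat e)" by blast
    from Z2_mult[OF Z2_nat[of "2^(e-1)"] this]
    have "Z2 (2 ^ (e - 1) * (2 ^ (e - 1) / of_nat e))" by simp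
    moreover have "(2::rat) ^ (e - 1) * (2 ^ (e - 1) / of_nat e) = 2 ^ (d - 1) / of_nat d"
    proof -
      obtain f where f: "e = Suc f" using \<open>e > 0\<close> by (cases e) auto
      have dd: "d - 1 = f + f + 1" using e f by simp
      have "(2::rat) ^ (d - 1) = 2 * (2 ^ f * 2 ^ f)" unfolding dd power_add by simp
      then show ?thesis using e f by (simp add: field_simps)
    qed
    ultimately show ?thesis by simp
  qed
qed

lemma lemB2: "n > 0 \<Longrightarrow> (\<Sum>j\<le>n. of_nat (Suc n choose j) * 2 ^ (Suc n - j) * bernoulli j) = (of_nat (Suc n) :: rat)"
proof -
  assume n: "n > 0"
  have "(\<Sum>j\<le>n. of_nat (Suc n choose j) * 2 ^ (Suc n - j) * bernoulli j)
     = (\<Sum>j\<le>n. of_nat (Suc n choose j) * bernoulli j * (2 ^ (Suc n - j) - 1)) + (\<Sum>j<Suc n. of_nat (Suc n choose j) * bernoulli j)"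
    by (simp add: lessThan_Suc_atMost sum.distrib[symmetric] algebra_simps)
  also have "\<dots> = of_nat (Suc n)" using lemB[of n] brec[of "Suc n"] n by simp
  finally show ?thesis .
qed

lemma Z2_bern: "Z2 (2 * bernoulli n)"
proof (induction n rule: less_induct)
  case (less n)
  show ?case
  proof (cases "n = 0")
    case True then show ?thesis using Z2_nat[of 2] by (simp add: B0)
  next
    case False
    hence n: "n > 0" by simp
    have key: "of_nat (Suc n choose j) * 2 ^ (Suc n - j) * bernoulli j
       = of_nat (Suc n) * (of_nat (n choose j) * (2 ^ (n - j) / of_nat (Suc n - j)) * (2 * bernoulli j))"
      if "j < n" for j
    proof -
      have "(Suc n - j) * (Suc n choose j) = Suc n * (n choose j)"
        using binomial_absorb_comp[of "Suc n" j] by simp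
      hence h0: "of_nat (Suc n - j) * of_nat (Suc n choose j) = (of_nat (Suc n) * of_nat (n choose j) :: rat)"
        by (metis of_nat_mult)
      have nz: "of_nat (Suc n - j) \<noteq> (0::rat)" using that by simp
      have h: "of_nat (Suc n choose j) = (of_nat (Suc n) * of_nat (n choose j) / of_nat (Suc n - j) :: rat)"
        using h0 nz by (simp add: field_simps)
      have p: "(2::rat) ^ (Suc n - j) = 2 * 2 ^ (n - j)" using that by (simp add: Suc_diff_le)
      show ?thesis unfolding h p using nz by (simp del: of_nat_Suc)
    qed
    have "of_nat (Suc n) = (\<Sum>j<n. of_nat (Suc n choose j) * 2 ^ (Suc n - j) * bernoulli j) + of_nat (Suc n) * (2 * bernoulli n)"
      using lemB2[OF n] by (simp add: lessThan_Suc_atMost[symmetric] Suc_diff_le del: of_nat_Suc)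
    also have "(\<Sum>j<n. of_nat (Suc n choose j) * 2 ^ (Suc n - j) * bernoulli j)
       = of_nat (Suc n) * (\<Sum>j<n. of_nat (n choose j) * (2 ^ (n - j) / of_nat (Suc n - j)) * (2 * bernoulli j))"
      by (simp add: sum_distrib_left key)
    finally have fe: "of_nat (Suc n) = of_nat (Suc n) * (\<Sum>j<n. of_nat (n choose j) * (2 ^ (n - j) / of_nat (Suc n - j)) * (2 * bernoulli j)) + of_nat (Suc n) * (2 * bernoulli n)" .
    define S where "S = (\<Sum>j<n. of_nat (n choose j) * (2 ^ (n - j) / of_nat (Suc n - j)) * (2 * bernoulli j))"
    have fe2: "of_nat (Suc n) * (1 - S - 2 * bernoulli n) = 0"
      using fe unfolding S_def[symmetric] by (simp only: right_diff_distrib mult_1_right)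
    hence "2 * bernoulli n = 1 - S" by (simp del: of_nat_Suc)
    hence "2 * bernoulli n = 1 - (\<Sum>j<n. of_nat (n choose j) * (2 ^ (n - j) / of_nat (Suc n - j)) * (2 * bernoulli j))"
      unfolding S_def .
    moreover have "Z2 (\<Sum>j<n. of_nat (n choose j) * (2 ^ (n - j) / of_nat (Suc n - j)) * (2 * bernoulli j))"
    proof (rule Z2_sum)
      fix j assume j: "j \<in> {..<n}"
      have "Z2 (2 ^ (Suc n - j - 1) / of_nat (Suc n - j))" using j by (intro Z2_pow_div) simp
      hence h: "Z2 (2 ^ (n - j) / of_nat (Suc n - j))" by simp
      have hb: "Z2 (2 * bernoulli j)" using less.IH[of j] j by simp
      show "Z2 (of_nat (n choose j) * (2 ^ (n - j) / of_nat (Suc n - j)) * (2 * bernoulli j))"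
        by (rule Z2_mult[OF Z2_mult[OF Z2_nat h] hb])
    qed
    ultimately show ?thesis using Z2_diff[OF Z2_nat[of 1]] by simp
  qed
qed

declare popcount.simps[simp del]

lemma pc0: "popcount 0 = 0" by (simp add: popcount.simps)
lemma pc_even: "popcount (2 * q) = popcount q"
  by (cases "q = 0") (simp add: pc0, subst popcount.simps, simp)
lemma pc_odd: "popcount (Suc (2 * q)) = Suc (popcount q)"
  by (subst popcount.simps) simp
lemma pc_le: "popcount n \<le> n"
proof (induction n rule: less_induct)
  case (less n)
  show ?case
  proof (cases "even n")
    case True
    then obtain q where q: "n = 2 * q" by blast
    show ?thesis
    proof (cases "q = 0")
      case True then show ?thesis using q by (simp add: pc0)
    next
      case False then show ?thesis using q less[of q] by (simp add: pc_even)
    qed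
  next
    case False
    then obtain q where q: "n = Suc (2 * q)" by (metis oddE Suc_eq_plus1)
    then show ?thesis using less[of q] by (simp add: pc_odd)
  qed
qed
lemma pc_pos: "n > 0 \<Longrightarrow> popcount n \<ge> 1"
proof (induction n rule: less_induct)
  case (less n)
  show ?case
  proof (cases "even n")
    case True
    then obtain q where q: "n = 2 * q" by blast
    then show ?thesis using less q by (simp add: pc_even)
  next
    case False
    then obtain q where q: "n = Suc (2 * q)" by (metis oddE Suc_eq_plus1)
    then show ?thesis by (simp add: pc_odd)
  qed
qed

lemma fact_double: "\<exists>P::nat. odd P \<and> fact (2 * q) = 2 ^ q * fact q * P"
proof (induction q)
  case 0 then show ?case by simp
next
  case (Suc q)
  then obtain P :: nat where P: "odd P" "fact (2 * q) = 2 ^ q * fact q * P" by blast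
  have "fact (2 * Suc q) = (2 * q + 2) * ((2 * q + 1) * (fact (2 * q) :: nat))"
    by (simp add: algebra_simps)
  also have "\<dots> = 2 ^ Suc q * fact (Suc q) * (P * (2 * q + 1))"
    using P by (simp add: algebra_simps)
  finally show ?case using P by (intro exI[of _ "P * (2 * q + 1)"]) simp
qed

lemma legendre: "\<exists>c::nat. odd c \<and> fact n = 2 ^ (n - popcount n) * c"
proof (induction n rule: less_induct)
  case (less n)
  show ?case
  proof (cases "n = 0")
    case True then show ?thesis by (simp add: pc0)
  next
    case n0: False
    obtain q r where qr: "n = 2 * q + r" "r < 2" by (metis mod_mult_div_eq mod_less_divisor zero_less_numeral add.commute)
    have "q < n" using qr n0 by auto
    then obtain c :: nat where c: "odd c" "fact q = 2 ^ (q - popcount q) * c" using less by blast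
    obtain P :: nat where P: "odd P" "fact (2 * q) = 2 ^ q * fact q * P" using fact_double by blast
    have pq: "popcount q \<le> q" by (rule pc_le)
    have f2: "fact (2 * q) = 2 ^ (2 * q - popcount q) * (c * P)"
    proof -
      have "2 * q - popcount q = q + (q - popcount q)" using pq by simp
      then show ?thesis using P c by (simp add: power_add algebra_simps)
    qed
    show ?thesis
    proof (cases "r = 0")
      case True
      then show ?thesis using f2 qr P c by (intro exI[of _ "c * P"]) (simp add: pc_even)
    next
      case False
      hence n: "n = Suc (2 * q)" using qr by simp
      have nn: "n - popcount n = 2 * q - popcount q" unfolding n pc_odd by simp
      have "fact n = (2 * q + 1) * fact (2 * q)" unfolding n by simp
      hence "fact n = 2 ^ (n - popcount n) * ((2 * q + 1) * (c * P))"
        unfolding nn f2 by (simp add: algebra_simps)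
      then show ?thesis using P c by (intro exI[of _ "(2 * q + 1) * (c * P)"]) simp
    qed
  qed
qed

lemma s_val: assumes "n > 0" shows "\<exists>r. Z2 r \<and> s_single n = 2 ^ (popcount n - 1) * r"
proof -
  define p where "p = popcount n"
  have p1: "p \<ge> 1" "p \<le> n" using pc_pos[OF assms] pc_le[of n] by (auto simp: p_def)
  obtain c :: nat where c: "odd c" "fact (2 * n) = 2 ^ (2 * n - p) * c"
    using legendre[of "2 * n"] by (auto simp: pc_even p_def)
  have cf: "(fact (2 * n) :: rat) = 2 ^ (2 * n - p) * of_nat c"
    using c(2) by (metis of_nat_fact of_nat_mult of_nat_numeral of_nat_power)
  define C where "C = 2 * bernoulli (2 * n)"
  have ZC: "Z2 C" unfolding C_def by (rule Z2_bern)
  define r where "r = ((2::rat) ^ (2 * n - 1) - 1) * \<bar>C\<bar> / of_nat c"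
  have Zr: "Z2 r" unfolding r_def
    using Z2_divodd[OF Z2_mult[OF Z2_diff[OF Z2_nat[of "2^(2*n-1)"] Z2_nat[of 1]] Z2_abs[OF ZC]] c(1)] by simp
  have c0: "of_nat c \<noteq> (0::rat)" using c(1) by (metis even_zero of_nat_eq_0_iff)
  have e: "2 * n = (p - 1) + (2 * n - p) + 1" using p1 by simp
  have pw: "(2::rat) ^ (2 * n) = 2 ^ (p - 1) * 2 ^ (2 * n - p) * 2"
    by (subst e) (simp only: power_add power_one_right)
  have ab: "\<bar>bernoulli (2 * n)\<bar> = \<bar>C\<bar> / 2" unfolding C_def by (simp add: abs_mult)
  have "s_single n = 2 ^ (p - 1) * r"
    unfolding s_single_def cf r_def ab pw using c0 by (simp add: field_simps)
  with Zr show ?thesis unfolding p_def by blast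
qed

lemma num_dvd: assumes "Z2 r" "q = 2 ^ e * r" shows "(2::int) ^ e dvd numerator q"
proof -
  obtain a b :: int where ab: "odd b" "r = of_int a / of_int b" using assms(1) unfolding Z2_def by blast
  obtain x y where xy: "quotient_of q = (x, y)" by (cases "quotient_of q")
  have y: "y > 0" using quotient_of_denom_pos[OF xy] .
  have qx: "q = of_int x / of_int y" using quotient_of_div[OF xy] .
  have b0: "b \<noteq> 0" using ab(1) by auto
  have "of_int x / of_int y = (2::rat) ^ e * (of_int a / of_int b)" using qx assms(2) ab(2) by simp
  hence "of_int (x * b) = (of_int (2 ^ e * a * y) :: rat)" using y b0 by (simp add: field_simps)
  hence eq: "x * b = 2 ^ e * a * y" by (simp only: of_int_eq_iff)
  have "(2::int) ^ e dvd x * b" unfolding eq by simp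
  moreover have "coprime ((2::int) ^ e) b" using ab(1) by simp
  ultimately have "(2::int) ^ e dvd x" by (simp add: coprime_dvd_mult_left_iff)
  then show ?thesis unfolding numerator_def xy by simp
qed

theorem proposition2p1:
  fixes k m :: nat
  assumes "k > 0" and "m = popcount k" and "m > 2"
  shows "(2::int) ^ (m - 2) dvd numerator (s_double k)
       \<and> (2::int) ^ (m - 2) dvd numerator (s_single (2 * k))"
proof -
  obtain r1 where r1: "Z2 r1" "s_single k = 2 ^ (m - 1) * r1" using s_val[OF assms(1)] assms(2) by blast
  obtain r2 where r2: "Z2 r2" "s_single (2 * k) = 2 ^ (m - 1) * r2"
    using s_val[of "2 * k"] assms(1,2) by (auto simp: pc_even)
  define t where "t = m - 2"
  have z2: "Z2 (2::rat)" using Z2_nat[of 2] by simp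
  have z2t: "Z2 ((2::rat) ^ t)" using Z2_nat[of "2 ^ t"] by simp
  have mt: "m - 1 = Suc t" using assms(3) by (simp add: t_def)
  have alg: "((2 * u * a) ^ 2 - 2 * u * b) / 2 = u * (2 * u * a ^ 2 - b)" for u a b :: rat
    by (simp add: power2_eq_square field_simps)
  have "s_double k = 2 ^ t * (2 ^ Suc t * r1 ^ 2 - r2)"
    unfolding s_double_def r1(2) r2(2) mt power_Suc using alg by simp
  hence A: "(2::int) ^ t dvd numerator (s_double k)"
    by (intro num_dvd[of "2 ^ Suc t * r1 ^ 2 - r2"]) (auto intro!: Z2_diff Z2_mult z2 z2t r1 r2 simp: power2_eq_square)
  have "s_single (2 * k) = 2 ^ t * (2 * r2)" unfolding r2(2) mt power_Suc by simp
  hence B: "(2::int) ^ t dvd numerator (s_single (2 * k))"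
    by (intro num_dvd[of "2 * r2"]) (auto intro!: Z2_mult z2 r2)
  show ?thesis using A B unfolding t_def by simp
qed

end
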